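(* Let $N_o>0$, $\alpha>0$, $\beta>0$ and $\eta(d)=\frac{1}{(1+d)^\alpha}$. If $C,D>0$ satisfy $$(1+C)^\alpha\sum_{k=1}^{\infty}\frac{6k+3}{(1+kC(1+D/2))^\alpha}<\frac1\beta,$$ then $(C,D)$ ensures the SINR$_\beta$ criterion under this propagation model.
   Context: $\mathrm{SINR}(t,r,T,P,N_o,\eta)=\dfrac{P\eta(\|t-r\|)}{N_o+\sum_{t'\in T}P\eta(\|t'-r\|)}$ for $t,r\in\mathbb{R}^2$, $T$ a finite subset of $\mathbb{R}^2$, $P>0$. $(t,r,T)$ satisfies DC$(C,D)$ if $\|t-r\|\le C$ and $\|t'-t''\|\ge C(2+D)$ for all distinct $t',t''\in T\cup\{t\}$. The pair $(C,D)$ ensures the SINR$_\beta$ criterion (given $N_o$ and $\eta$) if there exists $P>0$ such that every triple $(t,r,T)$ satisfying DC$(C,D)$ has $\mathrm{SINR}(t,r,T,P,N_o,\eta)\ge\beta$. *)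

theory Defs
  imports "HOL-Analysis.Analysis"
begin

type_synonym point = "real ^ 2"

definition SINR :: "point \<Rightarrow> point \<Rightarrow> point set \<Rightarrow> real \<Rightarrow> real \<Rightarrow> (real \<Rightarrow> real) \<Rightarrow> real" where
  "SINR t r T P No \<eta> =
     P * \<eta> (norm (t - r)) / (No + (\<Sum>t'\<in>T. P * \<eta> (norm (t' - r))))"

definition DC :: "real \<Rightarrow> real \<Rightarrow> point \<Rightarrow> point \<Rightarrow> point set \<Rightarrow> bool" where
  "DC C D t r T \<longleftrightarrow> norm (t - r) \<le> C \<and>
     (\<forall>t1\<in>T \<union> {t}. \<forall>t2\<in>T \<union> {t}. t1 \<noteq> t2 \<longrightarrow> norm (t1 - t2) \<ge> C * (2 + D))"

definition ensures_SINR :: "real \<Rightarrow> real \<Rightarrow> real \<Rightarrow> real \<Rightarrow> (real \<Rightarrow> real) \<Rightarrow> bool" where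
  "ensures_SINR \<beta> C D No \<eta> \<longleftrightarrow>
     (\<exists>P>0. \<forall>t r T. finite T \<longrightarrow> t \<notin> T \<longrightarrow> DC C D t r T \<longrightarrow> SINR t r T P No \<eta> \<ge> \<beta>)"

end

theory Submission
  imports Defs
begin

lemma ball_fm: "ball (c::'a::euclidean_space) e \<in> fmeasurable lborel"
proof -
  have "emeasure lborel (ball c e) \<le> emeasure lborel (cball c e)"
    by (rule emeasure_mono) auto
  also have "\<dots> < \<infinity>" using fmeasurable_compact[of "cball c e"] by (auto simp: fmeasurable_def)
  finally show ?thesis by (simp add: fmeasurable_def)
qed

lemma cball_fm: "cball (c::'a::euclidean_space) e \<in> fmeasurable lborel"
  by (simp add: fmeasurable_compact)

lemma packing:
  fixes S :: "point set" and r :: point and R :: real and k :: nat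
  assumes "finite S" "R > 0" "k \<ge> 1"
    and sep: "\<And>a b. a \<in> S \<Longrightarrow> b \<in> S \<Longrightarrow> a \<noteq> b \<Longrightarrow> norm (a - b) \<ge> 2 * R"
    and rng: "\<And>a. a \<in> S \<Longrightarrow> k * R \<le> norm (a - r) \<and> norm (a - r) < (k+1) * R"
  shows "real (card S) \<le> 6 * k + 3"
proof -
  define V where "V = unit_ball_vol (real DIM(point))"
  have V: "V > 0" unfolding V_def by simp
  have mb: "\<And>c e. e \<ge> 0 \<Longrightarrow> measure lborel (ball (c::point) e) = V * e^2"
    using content_ball[where 'a=point] unfolding V_def by simp
  have mcb: "\<And>c e. e \<ge> 0 \<Longrightarrow> measure lborel (cball (c::point) e) = V * e^2"
    using content_cball[where 'a=point] unfolding V_def by simp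
  have disj: "pairwise (\<lambda>a b. disjnt (ball a R) (ball b R)) S"
    unfolding pairwise_def disjnt_def
  proof (intro ballI impI equals0I)
    fix a b x assume ab: "a \<in> S" "b \<in> S" "a \<noteq> b" and "x \<in> ball a R \<inter> ball b R"
    then have x: "x \<in> ball a R" "x \<in> ball b R" by auto
    have "norm (a - b) \<le> dist a x + dist x b" by (metis dist_norm dist_triangle)
    also have "\<dots> < 2 * R" using x by (simp add: dist_commute)
    finally show False using sep[OF ab] by simp
  qed
  have "measure lborel (\<Union>a\<in>S. ball a R) = (\<Sum>a\<in>S. measure lborel (ball a R))"
    by (rule measure_UNION'[OF assms(1) _ disj]) (rule ball_fm)
  also have "\<dots> = card S * (V * R^2)" using mb assms(2) by simp
  finally have eq: "measure lborel (\<Union>a\<in>S. ball a R) = card S * (V * R^2)" .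
  have sub: "(\<Union>a\<in>S. ball a R) \<subseteq> ball r ((k+2)*R) - cball r ((k-1)*R)"
  proof
    fix x assume "x \<in> (\<Union>a\<in>S. ball a R)"
    then obtain a where a: "a \<in> S" "dist a x < R" by auto
    have t1: "dist r x \<le> dist r a + dist a x" by (rule dist_triangle)
    have t2: "dist r a \<le> dist r x + dist x a" by (rule dist_triangle)
    have "dist r a = norm (a - r)" by (simp add: dist_norm norm_minus_commute)
    with rng[OF a(1)] t1 t2 a(2) show "x \<in> ball r ((k+2)*R) - cball r ((k-1)*R)"
      using assms(3) by (auto simp: dist_commute algebra_simps of_nat_diff)
  qed
  have "measure lborel (\<Union>a\<in>S. ball a R) \<le> measure lborel (ball r ((k+2)*R) - cball r ((k-1)*R))"
    by (rule measure_mono_fmeasurable[OF sub]) (auto intro!: fmeasurable_Diff ball_fm borel_open open_UN)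
  also have "\<dots> = V * ((k+2)*R)^2 - V * ((k-1)*R)^2"
  proof -
    have "cball r ((k-1)*R) \<subseteq> ball r ((k+2)*R)" using assms(2,3) by (auto simp: of_nat_diff algebra_simps)
    then have "measure lborel (ball r ((k+2)*R) - cball r ((k-1)*R)) = measure lborel (ball r ((k+2)*R)) - measure lborel (cball r ((k-1)*R))"
      using ball_fm[of r "(k+2)*R"] by (intro measure_Diff) (auto simp: fmeasurable_def)
    then show ?thesis using assms(2,3) mb mcb by simp
  qed
  also have "\<dots> = (6*k+3) * (V * R^2)" using assms(3) by (simp add: of_nat_diff power2_eq_square algebra_simps)
  finally have "card S * (V*R^2) \<le> (6*k+3) * (V*R^2)" using eq by simp
  moreover have "V * R^2 > 0" using V assms(2) by simp
  ultimately show ?thesis by (rule mult_right_le_imp_le)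
qed
lemma interference:
  fixes C D \<alpha> :: real and t r :: point and T :: "point set"
  assumes fin: "finite T" and tT: "t \<notin> T" and dc: "DC C D t r T" and C: "C > 0" and D: "D > 0" and al: "\<alpha> > 0"
    and sm: "summable (\<lambda>k::nat. (6 * real (k+1) + 3) / (1 + real (k+1) * C * (1 + D / 2)) powr \<alpha>)"
  shows "(\<Sum>t'\<in>T. 1 / (1 + norm (t' - r)) powr \<alpha>) \<le> (\<Sum>k. (6 * real (k+1) + 3) / (1 + real (k+1) * C * (1 + D / 2)) powr \<alpha>)"
proof -
  define R where "R = C * (1 + D/2)"
  have R1: "R > 0" using C D unfolding R_def by simp
  have R2: "C \<le> R" using C D unfolding R_def by (simp add: algebra_simps)
  note R = R1 R2
  define g where "g = (\<lambda>k::nat. (6 * real (k+1) + 3) / (1 + real (k+1) * C * (1 + D / 2)) powr \<alpha>)"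
  define h where "h = (\<lambda>j::nat. 1 / (1 + real (j+1) * C * (1 + D / 2)) powr \<alpha>)"
  define \<phi> where "\<phi> = (\<lambda>x::point. nat \<lfloor>norm (x - r) / R\<rfloor> - 1)"
  have tr: "norm (t - r) \<le> C" using dc unfolding DC_def by auto
  have far: "norm (x - r) \<ge> R" if "x \<in> T" for x
  proof -
    have "x \<noteq> t" using that tT by auto
    then have "norm (x - t) \<ge> C * (2 + D)" using dc that unfolding DC_def by auto
    moreover have "norm (x - t) \<le> norm (x - r) + norm (t - r)"
      by (metis norm_triangle_ineq4 diff_diff_eq2 add.commute diff_add_cancel norm_minus_commute norm_triangle_sub)
    moreover have "C * D \<ge> 0" using C D by simp
    ultimately show ?thesis using tr unfolding R_def by (auto simp: algebra_simps)
  qed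
  have ring: "real (\<phi> x + 1) * R \<le> norm (x - r) \<and> norm (x - r) < real (\<phi> x + 1 + 1) * R" if "x \<in> T" for x
  proof -
    define m where "m = norm (x - r) / R"
    have m1: "m \<ge> 1" using far[OF that] R unfolding m_def by simp
    have fl: "\<lfloor>m\<rfloor> \<ge> 1" using m1 by linarith
    have e: "real (\<phi> x + 1) = of_int \<lfloor>m\<rfloor>" unfolding \<phi>_def m_def[symmetric] using fl by (simp add: of_nat_diff)
    have "of_int \<lfloor>m\<rfloor> \<le> m" "m < of_int \<lfloor>m\<rfloor> + 1" by linarith+
    moreover have mR: "m * R = norm (x - r)" unfolding m_def using R by simp
    ultimately have "of_int \<lfloor>m\<rfloor> * R \<le> norm (x - r)" "norm (x - r) < (of_int \<lfloor>m\<rfloor> + 1) * R"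
      using R by (metis mult_right_mono less_imp_le mR, metis mult_strict_right_mono mR)
    then show ?thesis using e by (simp add: add.commute)
  qed
  have card: "real (card {x\<in>T. \<phi> x = j}) \<le> 6 * real (j+1) + 3" for j
  proof -
    have "real (card {x\<in>T. \<phi> x = j}) \<le> real (6 * (j+1) + 3)"
    proof (rule packing)
      show "finite {x\<in>T. \<phi> x = j}" using fin by simp
      show "R > 0" by (rule R)
      show "1 \<le> j + 1" by simp
      show "2 * R \<le> norm (a - b)" if "a \<in> {x\<in>T. \<phi> x = j}" "b \<in> {x\<in>T. \<phi> x = j}" "a \<noteq> b" for a b
        using dc that unfolding DC_def R_def by (auto simp: algebra_simps)
      show "real (j+1) * R \<le> norm (a - r) \<and> norm (a - r) < real (j + 1 + 1) * R" if "a \<in> {x\<in>T. \<phi> x = j}" for a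
        using ring[of a] that by auto
    qed
    then show ?thesis by simp
  qed
  have pt: "1 / (1 + norm (x - r)) powr \<alpha> \<le> h (\<phi> x)" if "x \<in> T" for x
  proof -
    have "real (\<phi> x + 1) * C * (1 + D / 2) \<le> norm (x - r)" using ring[OF that] unfolding R_def by (simp add: mult.assoc)
    moreover have "0 \<le> real (\<phi> x + 1) * C * (1 + D / 2)" using C D by simp
    ultimately have "(1 + real (\<phi> x + 1) * C * (1 + D / 2)) powr \<alpha> \<le> (1 + norm (x - r)) powr \<alpha>"
      using al by (intro powr_mono2) auto
    moreover have "(1 + real (\<phi> x + 1) * C * (1 + D / 2)) powr \<alpha> > 0"
    proof -
      have "1 + real (\<phi> x + 1) * C * (1 + D / 2) > 0" using \<open>0 \<le> real (\<phi> x + 1) * C * (1 + D / 2)\<close> by linarith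
      then show ?thesis by simp
    qed
    ultimately show ?thesis unfolding h_def
      by (metis divide_left_mono less_le_trans mult_pos_pos zero_le_one)
  qed
  have "(\<Sum>t'\<in>T. 1 / (1 + norm (t' - r)) powr \<alpha>) \<le> (\<Sum>t'\<in>T. h (\<phi> t'))"
    by (rule sum_mono) (rule pt)
  also have "\<dots> = (\<Sum>j\<in>\<phi> ` T. (\<Sum>x\<in>{x\<in>T. \<phi> x = j}. h (\<phi> x)))"
    by (rule sum.image_gen[OF fin])
  also have "\<dots> = (\<Sum>j\<in>\<phi> ` T. real (card {x\<in>T. \<phi> x = j}) * h j)"
    by (intro sum.cong refl) simp
  also have "\<dots> \<le> (\<Sum>j\<in>\<phi> ` T. g j)"
  proof (intro sum_mono)
    fix j
    have "h j \<ge> 0" unfolding h_def by simp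
    then have "real (card {x\<in>T. \<phi> x = j}) * h j \<le> (6 * real (j+1) + 3) * h j"
      using card[of j] by (intro mult_right_mono) auto
    then show "real (card {x\<in>T. \<phi> x = j}) * h j \<le> g j" unfolding g_def h_def by simp
  qed
  also have "\<dots> \<le> suminf g"
    using sm unfolding g_def by (intro sum_le_suminf) (auto simp: fin)
  finally show ?thesis unfolding g_def .
qed

theorem corollary1:
  fixes No \<alpha> \<beta> C D :: real
  assumes "No > 0" "\<alpha> > 0" "\<beta> > 0" "C > 0" "D > 0"
    and "summable (\<lambda>k::nat. (6 * real (k+1) + 3) / (1 + real (k+1) * C * (1 + D / 2)) powr \<alpha>)"
    and "(1 + C) powr \<alpha> * (\<Sum>k. (6 * real (k+1) + 3) / (1 + real (k+1) * C * (1 + D / 2)) powr \<alpha>) < 1 / \<beta>"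
  shows "ensures_SINR \<beta> C D No (\<lambda>d. 1 / (1 + d) powr \<alpha>)"
proof -
  define S where "S = (\<Sum>k. (6 * real (k+1) + 3) / (1 + real (k+1) * C * (1 + D / 2)) powr \<alpha>)"
  define A where "A = (1 + C) powr \<alpha>"
  have A: "A > 0" unfolding A_def using assms(4) by simp
  have S0: "S \<ge> 0" unfolding S_def using assms(6) by (intro suminf_nonneg) auto
  have "A * S < 1 / \<beta>" using assms(7) unfolding A_def S_def .
  then have bAS: "\<beta> * A * S < 1" using assms(3) by (simp add: field_simps)
  define P where "P = \<beta> * A * No / (1 - \<beta> * A * S)"
  have P: "P > 0" unfolding P_def using bAS assms(1,3) A by simp
  have Peq: "\<beta> * No + \<beta> * P * S = P / A"
  proof -
    have "P * (1 - \<beta> * A * S) = \<beta> * A * No" unfolding P_def using bAS by simp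
    then show ?thesis using A by (simp add: field_simps)
  qed
  show ?thesis unfolding ensures_SINR_def
  proof (intro exI[of _ P] conjI P allI impI)
    fix t r :: point and T assume fin: "finite T" and tT: "t \<notin> T" and dc: "DC C D t r T"
    define I where "I = (\<Sum>t'\<in>T. 1 / (1 + norm (t' - r)) powr \<alpha>)"
    have IS: "I \<le> S" unfolding I_def S_def using interference[OF fin tT dc assms(4,5,2,6)] .
    have I0: "I \<ge> 0" unfolding I_def by (intro sum_nonneg) simp
    have tr: "norm (t - r) \<le> C" using dc unfolding DC_def by auto
    define e where "e = 1 / (1 + norm (t - r)) powr \<alpha>"
    have "(1 + norm (t - r)) powr \<alpha> \<le> A" unfolding A_def using tr assms(2) by (intro powr_mono2) auto
    moreover have "(1 + norm (t - r)) powr \<alpha> > 0"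
    proof -
      have "1 + norm (t - r) > 0" using norm_ge_zero[of "t - r"] by linarith
      then show ?thesis by simp
    qed
    ultimately have eA: "1 / A \<le> e" unfolding e_def using A by (intro divide_left_mono) auto
    have sumeq: "(\<Sum>t'\<in>T. P * (1 / (1 + norm (t' - r)) powr \<alpha>)) = P * I"
      unfolding I_def by (simp add: sum_distrib_left)
    have den: "No + P * I > 0" using assms(1) P I0 by (simp add: add_pos_nonneg)
    have "\<beta> * (No + P * I) \<le> \<beta> * No + \<beta> * P * S"
      using IS P assms(3) by (simp add: algebra_simps mult_left_mono)
    also have "\<dots> = P * (1 / A)" using Peq by simp
    also have "\<dots> \<le> P * e" using eA P by (intro mult_left_mono) auto
    finally have "\<beta> * (No + P * I) \<le> P * e" .
    then have "\<beta> \<le> P * e / (No + P * I)" using den by (simp add: field_simps)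
    then show "\<beta> \<le> SINR t r T P No (\<lambda>d. 1 / (1 + d) powr \<alpha>)"
      unfolding SINR_def using sumeq e_def by simp
  qed
qed

end
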